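(* Let $0<c<1$ and $\alpha \in \mathbb{C}$. Then there exists a constant $B(c)$ (also allowed to depend on $\alpha$) such that for all $0<u<c$, \[ \left|(-\log{(1-e^{-u})})^{\alpha}-(-\log{u})^{\alpha}\right| \leq B(c)\, u^{1/2}(-\log{u})^{\operatorname{Re}(\alpha)-1/2}. \]
   Context: Powers of positive reals are defined by $x^{\alpha}=e^{\alpha\log x}$. *)

theory Defs
  imports "HOL-Analysis.Analysis"
begin

end

theory Submission imports Defs "HOL-Complex_Analysis.Complex_Analysis" begin

lemma exp_sub1_bound:
  fixes w :: complex assumes "norm w \<le> K"
  shows "norm (exp w - 1) \<le> (2*(exp K + 1) + 3/2) * norm w"
proof (cases "norm w \<le> 1/2")
  case True
  then have "norm (exp w - 1) \<le> 3/2 * norm w" by (rule norm_exp_bounds(2))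
  also have "\<dots> \<le> (2*(exp K + 1) + 3/2) * norm w"
    by (intro mult_right_mono) auto
  finally show ?thesis .
next
  case False
  have "norm (exp w - 1) \<le> norm (exp w) + 1" by (metis norm_one norm_triangle_ineq4)
  also have "\<dots> \<le> exp K + 1" proof -
    have "norm (exp w) \<le> exp (norm w)" by (rule norm_exp)
    also have "\<dots> \<le> exp K" using assms by simp
    finally show ?thesis by simp
  qed
  also have "\<dots> \<le> 2*(exp K + 1) * norm w" proof -
    have "0 < exp K + 1" by (simp add: add_pos_pos)
    then have "(exp K + 1) * 1 \<le> (exp K + 1) * (2 * norm w)" using False
      by (intro mult_left_mono) auto
    then show ?thesis by (simp add: algebra_simps)
  qed
  also have "\<dots> \<le> (2*(exp K + 1) + 3/2) * norm w" by (intro mult_right_mono) auto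
  finally show ?thesis .
qed

lemma sqrt_bd:
  fixes x :: real assumes "0 \<le> x" shows "x powr (1/2) \<le> 1 + x"
proof (cases "x \<le> 1")
  case True
  then have "x powr (1/2) \<le> 1" using assms by (intro powr_le1) auto
  then show ?thesis using assms by linarith
next
  case False
  then have "x powr (1/2) \<le> x powr 1" by (intro powr_mono) auto
  then show ?thesis using False by simp
qed

lemma log_bounds:
  fixes u :: real assumes "0 < u" "u < 1"
  shows "- ln u \<le> - ln (1 - exp (- u))" "- ln (1 - exp (- u)) \<le> - ln u + u"
proof -
  have e1: "1 - u \<le> exp (-u)" using exp_ge_add_one_self[of "-u"] by simp
  have e2: "u * exp (-u) \<le> 1 - exp (-u)"
  proof -
    have "u + 1 \<le> exp u" using exp_ge_add_one_self[of u] by linarith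
    then have "(u+1) * exp (-u) \<le> exp u * exp (-u)" by (intro mult_right_mono) auto
    then show ?thesis by (simp add: exp_minus_inverse algebra_simps)
  qed
  have pos: "0 < u * exp (-u)" using assms by simp
  show "- ln u \<le> - ln (1 - exp (- u))" proof -
    have "exp (-u) < 1" using assms by simp
    then have "0 < 1 - exp (-u)" by simp
    moreover have "1 - exp (-u) \<le> u" using e1 by simp
    ultimately have "ln (1 - exp (-u)) \<le> ln u" using assms by simp
    then show ?thesis by simp
  qed
  have "ln (u * exp (-u)) \<le> ln (1 - exp (-u))"
    using e2 by (simp only: ln_le_cancel_iff[OF pos order.strict_trans2[OF pos e2]])
  then show "- ln (1 - exp (- u)) \<le> - ln u + u" using assms by (simp add: ln_mult)
qed


lemma powr_split:
  fixes u L a :: real assumes "0 < u" "0 < L"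
  shows "L powr a * (u / L) = u powr (1/2) * L powr (a - 1/2) * (u/L) powr (1/2)"
proof -
  have u: "u = u powr (1/2) * u powr (1/2)" using assms by (simp add: powr_add[symmetric])
  have L: "L = L powr (1/2) * L powr (1/2)" using assms by (simp add: powr_add[symmetric])
  have La: "L powr a = L powr (a - 1/2) * L powr (1/2)" using assms by (simp add: powr_add[symmetric])
  have d: "(u/L) powr (1/2) = u powr (1/2) / L powr (1/2)" using assms by (simp add: powr_divide)
  have p: "L powr (1/2) > 0" using assms by simp
  have gen: "\<And>p q r::real. p > 0 \<Longrightarrow> r * p * ((q*q) / (p*p)) = q * r * (q / p)"
    by (simp add: field_simps power2_eq_square)
  have "L powr a * (u / L) = (L powr (a - 1/2) * L powr (1/2)) * ((u powr (1/2) * u powr (1/2)) / (L powr (1/2) * L powr (1/2)))"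
    using La u L by metis
  also have "\<dots> = u powr (1/2) * L powr (a - 1/2) * (u powr (1/2) / L powr (1/2))"
    using gen[OF p] by blast
  finally show ?thesis using d by simp
qed

theorem proposition1:
  fixes c :: real and \<alpha> :: complex
  assumes "0 < c" and "c < 1"
  shows "\<exists>B::real. \<forall>u::real. 0 < u \<and> u < c \<longrightarrow>
    cmod (complex_of_real (- ln (1 - exp (- u))) powr \<alpha> - complex_of_real (- ln u) powr \<alpha>)
      \<le> B * u powr (1/2) * (- ln u) powr (Re \<alpha> - 1/2)"
proof -
  define L0 where "L0 = - ln c"
  have L0: "0 < L0" using assms by (simp add: L0_def)
  define K where "K = norm \<alpha> / L0"
  define C where "C = 2*(exp K + 1) + 3/2"
  have C: "0 \<le> C" by (simp add: C_def add_nonneg_nonneg)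
  show ?thesis
  proof (intro exI allI impI)
    fix u :: real assume u: "0 < u \<and> u < c"
    define L where "L = - ln u"
    define M where "M = - ln (1 - exp (- u))"
    have u1: "u < 1" using u assms by simp
    have LL0: "L0 \<le> L" using u by (simp add: L_def L0_def)
    have Lpos: "0 < L" using L0 LL0 by simp
    have hML: "L \<le> M" "M \<le> L + u" using log_bounds[of u] u u1 by (auto simp: L_def M_def)
    have Mpos: "0 < M" using hML Lpos by simp
    define d where "d = ln M - ln L"
    have d0: "0 \<le> d" using hML Lpos by (simp add: d_def)
    have "d = ln (M / L)" using Mpos Lpos by (simp add: d_def ln_div)
    also have "\<dots> \<le> M / L - 1" using Mpos Lpos by (intro ln_le_minus_one) simp
    also have "\<dots> = (M - L) / L" using Lpos by (simp add: field_simps)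
    also have "\<dots> \<le> u / L" using hML Lpos by (intro divide_right_mono) auto
    finally have d1: "d \<le> u / L" .
    define w where "w = \<alpha> * complex_of_real d"
    have nw: "norm w = norm \<alpha> * d" using d0 by (simp add: w_def norm_mult)
    have "u / L \<le> 1 / L0" using u1 LL0 L0 u by (simp add: frac_le)
    then have dK: "d \<le> 1 / L0" using d1 by linarith
    have nwK: "norm w \<le> K" unfolding nw K_def using dK
      by (metis divide_inverse mult_left_mono mult_1 norm_ge_zero)
    have eb: "norm (exp w - 1) \<le> C * (norm \<alpha> * (u / L))"
    proof -
      have "norm (exp w - 1) \<le> C * norm w" using exp_sub1_bound[OF nwK] by (simp add: C_def)
      also have "\<dots> \<le> C * (norm \<alpha> * (u / L))" unfolding nw using d1 C
        by (intro mult_left_mono) auto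
      finally show ?thesis .
    qed
    have pM: "complex_of_real M powr \<alpha> = exp (\<alpha> * of_real (ln L)) * exp w"
      using Mpos Lpos by (simp add: powr_def Ln_of_real w_def d_def exp_add[symmetric] algebra_simps)
    have pL: "complex_of_real L powr \<alpha> = exp (\<alpha> * of_real (ln L))"
      using Lpos by (simp add: powr_def Ln_of_real)
    have nL: "norm (exp (\<alpha> * of_real (ln L))) = L powr Re \<alpha>"
      using Lpos by (simp add: powr_def)
    have "cmod (complex_of_real M powr \<alpha> - complex_of_real L powr \<alpha>)
        = L powr Re \<alpha> * norm (exp w - 1)"
      proof -
        have "complex_of_real M powr \<alpha> - complex_of_real L powr \<alpha> = exp (\<alpha> * of_real (ln L)) * (exp w - 1)"
          unfolding pM pL by (simp add: algebra_simps)
        then show ?thesis by (simp only: norm_mult nL)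
      qed
    also have "\<dots> \<le> L powr Re \<alpha> * (C * (norm \<alpha> * (u / L)))"
      by (intro mult_left_mono eb) simp
    also have "\<dots> = C * norm \<alpha> * (L powr Re \<alpha> * (u / L))" by simp
    also have "\<dots> = C * norm \<alpha> * (u powr (1/2) * L powr (Re \<alpha> - 1/2) * (u/L) powr (1/2))"
      using powr_split[of u L "Re \<alpha>"] u Lpos by simp
    also have "\<dots> \<le> C * norm \<alpha> * (u powr (1/2) * L powr (Re \<alpha> - 1/2) * (1 + 1 / L0))"
    proof -
      have "(u/L) powr (1/2) \<le> 1 + u/L" using u Lpos by (intro sqrt_bd) simp
      also have "\<dots> \<le> 1 + 1/L0" using \<open>u / L \<le> 1 / L0\<close> by simp
      finally show ?thesis using C by (intro mult_left_mono) auto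
    qed
    also have "\<dots> = (C * norm \<alpha> * (1 + 1/L0)) * u powr (1/2) * L powr (Re \<alpha> - 1/2)" by simp
    finally show "cmod (complex_of_real (- ln (1 - exp (- u))) powr \<alpha> - complex_of_real (- ln u) powr \<alpha>)
      \<le> (C * norm \<alpha> * (1 + 1/L0)) * u powr (1/2) * (- ln u) powr (Re \<alpha> - 1/2)"
      by (simp add: L_def M_def)
  qed
qed

end
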